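(* Let $\flat\in\{>,<\}$. For $\imath\in\{1,\dots,2n-1\}$ set $\Xi_\imath=\max\{r\in\frac12\mathbb Z\mid(\imath,r)\in\widehat I^{\mathrm{tw},\flat}_\xi\}$. Then: - $\Xi_\imath=\xi(\imath)$ if $1\le\imath\le n-1$; - $\Xi_n=\frac12(\xi(n-1)+\xi(n))+1$ if $\flat={>}$; - $\Xi_n=\frac12(\xi(n-1)+\xi(n))$ if $\flat={<}$; - $\Xi_\imath=\xi(\imath-1)$ if $n+1\le\imath\le 2n-1$.
   Context: Fix $n\ge2$. Let $\mathcal Q$ be a quiver whose underlying graph is the Dynkin diagram of type $\mathrm A_{2n-2}$ (vertices $1,\dots,2n-2$, edges $\{i,i+1\}$), and let $\xi:\{1,\dots,2n-2\}\to\mathbb Z$ be a height function: $\xi(j)=\xi(i)+1$ whenever there is an arrow $i\to j$. Let $\widehat I_\xi=\{(i,p):1\le i\le 2n-2,\ p\equiv\xi(i)\ (\mathrm{mod}\ 2),\ \xi(2n-1-i)-(2n-1)<p\le\xi(i)\}$. For $\flat\in\{>,<\}$, $\widehat I^{\mathrm{tw},\flat}_\xi\subset\{1,\dots,2n-1\}\times\frac12\mathbb Z$ is the union of: - $\{(i,p)\in\widehat I_\xi: i\le n-1\}$; - $\{(i+1,p):(i,p)\in\widehat I_\xi,\ i\ge n\}$; - the points $(n,p-\frac12)$ for which $\{(n-1,p-1),(n,p)\}\subset\widehat I_\xi$ or $\{(n,p-1),(n-1,p)\}\subset\widehat I_\xi$; - the point $(n,r_M+\frac12)$ if $\flat={>}$,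 resp. $(n,r_m-\frac12)$ if $\flat={<}$, where $r_M$, resp. $r_m$, is the maximum, resp. minimum, of $\{p:(n-1,p)\in\widehat I_\xi\text{ or }(n,p)\in\widehat I_\xi\}$. *)

theory Defs
  imports Complex_Main
begin

text \<open>Orientation of the quiver with underlying graph A_{2n-2}:
  dir i = True means the arrow between i and i+1 is i -> i+1, otherwise i+1 -> i.\<close>
definition is_height_function :: "nat \<Rightarrow> (nat \<Rightarrow> bool) \<Rightarrow> (nat \<Rightarrow> int) \<Rightarrow> bool" where
  "is_height_function n dir \<xi> \<longleftrightarrow>
     (\<forall>i. 1 \<le> i \<and> i + 1 \<le> 2*n - 2 \<longrightarrow>
        (if dir i then \<xi> (i+1) = \<xi> i + 1 else \<xi> i = \<xi> (i+1) + 1))"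

definition Ihat :: "nat \<Rightarrow> (nat \<Rightarrow> int) \<Rightarrow> (nat \<times> int) set" where
  "Ihat n \<xi> = {(i, p). 1 \<le> i \<and> i \<le> 2*n - 2 \<and> p mod 2 = \<xi> i mod 2 \<and>
       \<xi> (2*n - 1 - i) - int (2*n - 1) < p \<and> p \<le> \<xi> i}"

datatype flat = FGt | FLt

definition rM :: "nat \<Rightarrow> (nat \<Rightarrow> int) \<Rightarrow> int" where
  "rM n \<xi> = Max {p. (n - 1, p) \<in> Ihat n \<xi> \<or> (n, p) \<in> Ihat n \<xi>}"

definition rm :: "nat \<Rightarrow> (nat \<Rightarrow> int) \<Rightarrow> int" where
  "rm n \<xi> = Min {p. (n - 1, p) \<in> Ihat n \<xi> \<or> (n, p) \<in> Ihat n \<xi>}"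

definition Itw :: "flat \<Rightarrow> nat \<Rightarrow> (nat \<Rightarrow> int) \<Rightarrow> (nat \<times> rat) set" where
  "Itw b n \<xi> =
     {(i, of_int p) | i p. (i, p) \<in> Ihat n \<xi> \<and> i \<le> n - 1}
   \<union> {(i + 1, of_int p) | i p. (i, p) \<in> Ihat n \<xi> \<and> n \<le> i}
   \<union> {(n, of_int p - 1/2) | p.
        ((n - 1, p - 1) \<in> Ihat n \<xi> \<and> (n, p) \<in> Ihat n \<xi>) \<or>
        ((n, p - 1) \<in> Ihat n \<xi> \<and> (n - 1, p) \<in> Ihat n \<xi>)}
   \<union> (case b of FGt \<Rightarrow> {(n, of_int (rM n \<xi>) + 1/2)}
              | FLt \<Rightarrow> {(n, of_int (rm n \<xi>) - 1/2)})"

definition Xi :: "flat \<Rightarrow> nat \<Rightarrow> (nat \<Rightarrow> int) \<Rightarrow> nat \<Rightarrow> rat" where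
  "Xi b n \<xi> i = Max {r. (i, r) \<in> Itw b n \<xi>}"

end

theory Submission
  imports Defs
begin

lemma hf_step:
  assumes "is_height_function n dir \<xi>" "1 \<le> i" "i + 1 \<le> 2*n - 2"
  shows "\<bar>\<xi> (i+1) - \<xi> i\<bar> = 1"
  using assms unfolding is_height_function_def
  by (metis (no_types, opaque_lifting) abs_minus_commute abs_one add_diff_cancel_left')

lemma hf_lip:
  assumes "is_height_function n dir \<xi>" "1 \<le> i" "i + k \<le> 2*n - 2"
  shows "\<bar>\<xi> (i+k) - \<xi> i\<bar> \<le> int k"
  using assms(3)
proof (induction k)
  case 0 then show ?case by simp
next
  case (Suc k)
  have "\<bar>\<xi> (i+k+1) - \<xi> (i+k)\<bar> = 1"
    using hf_step[OF assms(1), of "i+k"] assms(2) Suc.prems by simp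
  moreover have "\<bar>\<xi> (i+k) - \<xi> i\<bar> \<le> int k" using Suc by simp
  ultimately show ?case by simp
qed

lemma Ihat_mem: "(i, p) \<in> Ihat n \<xi> \<longleftrightarrow> 1 \<le> i \<and> i \<le> 2*n - 2 \<and> p mod 2 = \<xi> i mod 2 \<and>
       \<xi> (2*n - 1 - i) - int (2*n - 1) < p \<and> p \<le> \<xi> i"
  unfolding Ihat_def by simp

lemma diag_mem:
  assumes "is_height_function n dir \<xi>" "1 \<le> i" "i \<le> 2*n - 2"
  shows "(i, \<xi> i) \<in> Ihat n \<xi>"
proof -
  define j where "j = 2*n - 1 - i"
  have j: "1 \<le> j" "j \<le> 2*n-2" using assms(2,3) unfolding j_def by auto
  have "\<bar>\<xi> j - \<xi> i\<bar> \<le> int (2*n - 3)"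
  proof (cases "i \<le> j")
    case True
    have "\<bar>\<xi> (i + (j-i)) - \<xi> i\<bar> \<le> int (j-i)"
      using hf_lip[OF assms(1) assms(2), of "j-i"] True j by simp
    then show ?thesis using True j assms by simp
  next
    case False
    have "\<bar>\<xi> (j + (i-j)) - \<xi> j\<bar> \<le> int (i-j)"
      using hf_lip[OF assms(1) j(1), of "i-j"] False assms by simp
    then show ?thesis using False j assms by simp
  qed
  then show ?thesis unfolding Ihat_mem j_def[symmetric] using assms j by auto
qed

lemma Ihat_finite: "finite (Ihat n \<xi>)"
proof (rule finite_subset)
  show "Ihat n \<xi> \<subseteq> Sigma {1..2*n-2} (\<lambda>i. {\<xi>(2*n-1-i) - int(2*n-1) <.. \<xi> i})"
    unfolding Ihat_def by auto
  show "finite (Sigma {1..2*n-2} (\<lambda>i. {\<xi>(2*n-1-i) - int(2*n-1) <.. \<xi> i}))"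
    by (rule finite_SigmaI) auto
qed

lemma Itw_finite: "finite (Itw b n \<xi>)"
proof -
  have f: "finite (snd ` Ihat n \<xi>)" using Ihat_finite by simp
  have "Itw b n \<xi> \<subseteq> (\<lambda>(i,p). (i, of_int p)) ` Ihat n \<xi> \<union> (\<lambda>(i,p). (i+1, of_int p)) ` Ihat n \<xi>
     \<union> (\<lambda>p. (n, of_int p - 1/2)) ` snd ` Ihat n \<xi> \<union> {(n, of_int (rM n \<xi>) + 1/2), (n, of_int (rm n \<xi>) - 1/2)}"
    unfolding Itw_def by (auto split: flat.splits intro: image_eqI) (force intro: image_eqI)+
  moreover have "finite ((\<lambda>(i,p). (i, of_int p)) ` Ihat n \<xi> \<union> (\<lambda>(i,p). (i+1, of_int p)) ` Ihat n \<xi>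
     \<union> (\<lambda>p. (n, of_int p - 1/2)) ` snd ` Ihat n \<xi> \<union> {(n, of_int (rM n \<xi>) + 1/2::rat), (n, of_int (rm n \<xi>) - 1/2)})"
    using Ihat_finite f by simp
  ultimately show ?thesis by (rule finite_subset)
qed

lemma slice_finite: "finite {r. (i, r) \<in> Itw b n \<xi>}"
proof -
  have "{r. (i, r) \<in> Itw b n \<xi>} \<subseteq> snd ` Itw b n \<xi>" by force
  then show ?thesis using Itw_finite finite_subset by blast
qed


lemma slice_low:
  assumes "n \<ge> 2" "1 \<le> i" "i \<le> n - 1" "(i, r) \<in> Itw b n \<xi>"
  shows "r \<le> of_int (\<xi> i)"
  using assms unfolding Itw_def Ihat_mem by (auto split: flat.splits)

lemma slice_high:
  assumes "n \<ge> 2" "n + 1 \<le> i" "(i, r) \<in> Itw b n \<xi>"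
  shows "r \<le> of_int (\<xi> (i - 1))"
  using assms unfolding Itw_def Ihat_mem by (auto split: flat.splits)

lemma slice_mid:
  assumes "n \<ge> 2" "(n, r) \<in> Itw b n \<xi>"
  shows "r \<le> of_int (max (\<xi> (n-1)) (\<xi> n)) - 1/2 \<or>
    (b = FGt \<and> r = of_int (rM n \<xi>) + 1/2) \<or> (b = FLt \<and> r = of_int (rm n \<xi>) - 1/2)"
  using assms unfolding Itw_def Ihat_mem by (auto split: flat.splits simp: le_max_iff_disj)

theorem lemma3p23:
  fixes n :: nat and dir :: "nat \<Rightarrow> bool" and \<xi> :: "nat \<Rightarrow> int" and b :: flat
  assumes "n \<ge> 2"
    and "is_height_function n dir \<xi>"
  shows "(\<forall>i. 1 \<le> i \<and> i \<le> n - 1 \<longrightarrow> Xi b n \<xi> i = of_int (\<xi> i))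
       \<and> (b = FGt \<longrightarrow> Xi b n \<xi> n = of_int (\<xi> (n - 1) + \<xi> n) / 2 + 1)
       \<and> (b = FLt \<longrightarrow> Xi b n \<xi> n = of_int (\<xi> (n - 1) + \<xi> n) / 2)
       \<and> (\<forall>i. n + 1 \<le> i \<and> i \<le> 2*n - 1 \<longrightarrow> Xi b n \<xi> i = of_int (\<xi> (i - 1)))"
proof (intro conjI allI impI)
  fix i assume i: "1 \<le> i \<and> i \<le> n - 1"
  have "(i, \<xi> i) \<in> Ihat n \<xi>" using diag_mem[OF assms(2)] i by auto
  then have "(i, of_int (\<xi> i)) \<in> Itw b n \<xi>" using i unfolding Itw_def by blast
  then show "Xi b n \<xi> i = of_int (\<xi> i)" unfolding Xi_def
    using slice_finite slice_low[OF assms(1)] i by (intro Max_eqI) auto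
next
  fix i assume i: "n + 1 \<le> i \<and> i \<le> 2*n - 1"
  have "(i - 1, \<xi> (i - 1)) \<in> Ihat n \<xi>" using diag_mem[OF assms(2)] i by auto
  then have "(i, of_int (\<xi> (i - 1))) \<in> {(j + 1, of_int p) | j p. (j, p) \<in> Ihat n \<xi> \<and> n \<le> j}"
    using i by (intro CollectI exI[of _ "i-1"] exI[of _ "\<xi> (i-1)"]) auto
  then have "(i, of_int (\<xi> (i - 1))) \<in> Itw b n \<xi>" unfolding Itw_def by blast
  then show "Xi b n \<xi> i = of_int (\<xi> (i - 1))" unfolding Xi_def
    using slice_finite slice_high[OF assms(1)] i by (intro Max_eqI) auto
next
  define a where "a = \<xi> (n-1)"
  define c where "c = \<xi> n"
  have ac: "\<bar>c - a\<bar> = 1" using hf_step[OF assms(2), of "n-1"] assms(1) unfolding a_def c_def by simp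
  have am: "(n-1, a) \<in> Ihat n \<xi>" using diag_mem[OF assms(2), of "n-1"] assms(1) unfolding a_def by simp
  have cm: "(n, c) \<in> Ihat n \<xi>" using diag_mem[OF assms(2), of "n"] assms(1) unfolding c_def by simp
  define S where "S = {p. (n - 1, p) \<in> Ihat n \<xi> \<or> (n, p) \<in> Ihat n \<xi>}"
  have Sf: "finite S"
  proof -
    have "S \<subseteq> snd ` Ihat n \<xi>" unfolding S_def by force
    then show ?thesis using Ihat_finite finite_subset by blast
  qed
  have rM: "rM n \<xi> = max a c"
    unfolding rM_def S_def[symmetric]
  proof (rule Max_eqI[OF Sf])
    show "max a c \<in> S" using am cm unfolding S_def by (auto simp: max_def)
    show "\<And>y. y \<in> S \<Longrightarrow> y \<le> max a c" unfolding S_def Ihat_mem a_def c_def by auto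
  qed
  have rm: "rm n \<xi> \<le> min a c"
    unfolding rm_def S_def[symmetric] using am cm Sf unfolding S_def by (auto simp: min_def)
  have mid: "(n, of_int (max a c) - 1/2) \<in> Itw b n \<xi>"
  proof -
    have "((n - 1, max a c - 1) \<in> Ihat n \<xi> \<and> (n, max a c) \<in> Ihat n \<xi>) \<or>
        ((n, max a c - 1) \<in> Ihat n \<xi> \<and> (n - 1, max a c) \<in> Ihat n \<xi>)"
    proof (cases "c = a + 1")
      case True then show ?thesis using am cm by (simp add: max_def)
    next
      case False then have "a = c + 1" using ac by auto
      then show ?thesis using am cm by (simp add: max_def)
    qed
    then show ?thesis unfolding Itw_def by blast
  qed
  have half: "(of_int (a + c) :: rat) / 2 = of_int (max a c) - 1/2"
  proof (cases "c = a + 1")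
    case True then show ?thesis by (simp add: field_simps max_def)
  next
    case False then have "a = c + 1" using ac by auto
    then show ?thesis by (simp add: field_simps max_def)
  qed
  {
    assume b: "b = FGt"
    have mem: "(n, of_int (max a c) + 1/2) \<in> Itw b n \<xi>" unfolding Itw_def b rM by simp
    have "Xi b n \<xi> n = of_int (max a c) + 1/2" unfolding Xi_def
    proof (rule Max_eqI[OF slice_finite])
      show "of_int (max a c) + 1/2 \<in> {r. (n, r) \<in> Itw b n \<xi>}" using mem by simp
      show "\<And>y. y \<in> {r. (n, r) \<in> Itw b n \<xi>} \<Longrightarrow> y \<le> of_int (max a c) + 1/2"
        using slice_mid[OF assms(1)] b rM unfolding a_def c_def by fastforce
    qed
    then show "Xi b n \<xi> n = of_int (\<xi> (n - 1) + \<xi> n) / 2 + 1"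
      using half unfolding a_def c_def by (simp add: field_simps)
  }
  {
    assume b: "b = FLt"
    have "Xi b n \<xi> n = of_int (max a c) - 1/2" unfolding Xi_def
    proof (rule Max_eqI[OF slice_finite])
      show "of_int (max a c) - 1/2 \<in> {r. (n, r) \<in> Itw b n \<xi>}" using mid by simp
      have "(of_int (rm n \<xi>) :: rat) \<le> of_int (max a c)" using rm by (simp add: le_max_iff_disj)
      then show "\<And>y. y \<in> {r. (n, r) \<in> Itw b n \<xi>} \<Longrightarrow> y \<le> of_int (max a c) - 1/2"
        using slice_mid[OF assms(1)] b rm unfolding a_def c_def by fastforce
    qed
    then show "Xi b n \<xi> n = of_int (\<xi> (n - 1) + \<xi> n) / 2"
      using half unfolding a_def c_def by simp
  }
qed

end
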